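(* Let $n\ge3$ and $c\ge1$. For every $t\in\{1,\dots,c\}$ and every $i\in\{1,\dots,n-2\}$, neither of the relations \[ \rho_i\sigma_{i+1,t}\sigma_{i,t}=\sigma_{i+1,t}\sigma_{i,t}\rho_{i+1},\qquad \rho_{i+1}\sigma_{i,t}\sigma_{i+1,t}=\sigma_{i,t}\sigma_{i+1,t}\rho_i \] holds in $UV_n(c)$; that is, imposing either relation yields a proper quotient of $UV_n(c)$.
   Context: $UV_n(c)$ is the group with generators $\rho_i$ ($1\le i\le n-1$), $\sigma_{i,t}$ ($1\le i\le n-1$, $1\le t\le c$) and relations $\rho_i\rho_{i+1}\rho_i=\rho_{i+1}\rho_i\rho_{i+1}$ ($1\le i\le n-2$), $\rho_i\rho_j=\rho_j\rho_i$ ($|i-j|\ge2$), $\rho_i^2=1$, $\sigma_{i,t}\sigma_{j,\ell}=\sigma_{j,\ell}\sigma_{i,t}$ ($|i-j|\ge2$, $1\le t,\ell\le c$), $\sigma_{i,t}\rho_j=\rho_j\sigma_{i,t}$ ($|i-j|\ge2$), $\rho_i\rho_{i+1}\sigma_{i,t}=\sigma_{i+1,t}\rho_i\rho_{i+1}$ ($1\le i\le n-2$, $1\le t\le c$). *)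

theory Defs
  imports Main
begin

datatype gen = Rho nat | Sig nat nat

text \<open>Group words: a letter (g, False) is g, (g, True) is g inverse.\<close>
type_synonym word = "(gen \<times> bool) list"

definition rho :: "nat \<Rightarrow> word" where "rho i = [(Rho i, False)]"
definition sig :: "nat \<Rightarrow> nat \<Rightarrow> word" where "sig i t = [(Sig i t, False)]"

definition uv_rels :: "nat \<Rightarrow> nat \<Rightarrow> (word \<times> word) set" where
  "uv_rels n c =
     {(rho i @ rho (i+1) @ rho i, rho (i+1) @ rho i @ rho (i+1)) | i. 1 \<le> i \<and> i \<le> n - 2}
   \<union> {(rho i @ rho j, rho j @ rho i) | i j. 1 \<le> i \<and> i \<le> n - 1 \<and> 1 \<le> j \<and> j \<le> n - 1
        \<and> (i + 2 \<le> j \<or> j + 2 \<le> i)}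
   \<union> {(rho i @ rho i, []) | i. 1 \<le> i \<and> i \<le> n - 1}
   \<union> {(sig i t @ sig j l, sig j l @ sig i t) | i j t l. 1 \<le> i \<and> i \<le> n - 1 \<and> 1 \<le> j \<and> j \<le> n - 1
        \<and> (i + 2 \<le> j \<or> j + 2 \<le> i) \<and> 1 \<le> t \<and> t \<le> c \<and> 1 \<le> l \<and> l \<le> c}
   \<union> {(sig i t @ rho j, rho j @ sig i t) | i j t. 1 \<le> i \<and> i \<le> n - 1 \<and> 1 \<le> j \<and> j \<le> n - 1
        \<and> (i + 2 \<le> j \<or> j + 2 \<le> i) \<and> 1 \<le> t \<and> t \<le> c}
   \<union> {(rho i @ rho (i+1) @ sig i t, sig (i+1) t @ rho i @ rho (i+1)) | i t.
        1 \<le> i \<and> i \<le> n - 2 \<and> 1 \<le> t \<and> t \<le> c}"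

inductive uv_eq :: "nat \<Rightarrow> nat \<Rightarrow> word \<Rightarrow> word \<Rightarrow> bool" for n c where
  refl: "uv_eq n c w w"
| sym: "uv_eq n c u v \<Longrightarrow> uv_eq n c v u"
| trans: "uv_eq n c u v \<Longrightarrow> uv_eq n c v w \<Longrightarrow> uv_eq n c u w"
| cancel: "uv_eq n c [(g, b), (g, \<not> b)] []"
| rel: "(u, v) \<in> uv_rels n c \<Longrightarrow> uv_eq n c u v"
| append: "uv_eq n c u v \<Longrightarrow> uv_eq n c u' v' \<Longrightarrow> uv_eq n c (u @ u') (v @ v')"

end

theory Submission
  imports Defs
begin

definition tr :: "nat \<Rightarrow> nat \<Rightarrow> nat" where
  "tr i = (\<lambda>x. if x = i then i+1 else if x = i+1 then i else x)"

fun ev :: "word \<Rightarrow> nat \<Rightarrow> nat" where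
  "ev [] = id"
| "ev ((Rho i, b) # w) = tr i \<circ> ev w"
| "ev ((Sig j t, b) # w) = ev w"

lemma ev_append: "ev (u @ v) = ev u \<circ> ev v"
proof (induction u)
  case (Cons a u)
  then show ?case by (cases a; cases "fst a") auto
qed simp

lemma tr_tr: "tr i \<circ> tr i = id"
  by (auto simp: tr_def fun_eq_iff)

lemma ev_rels: "(u, v) \<in> uv_rels n c \<Longrightarrow> ev u = ev v"
  unfolding uv_rels_def
  by (auto simp: rho_def sig_def tr_def fun_eq_iff)

lemma ev_eq: "uv_eq n c u v \<Longrightarrow> ev u = ev v"
proof (induction rule: uv_eq.induct)
  case (cancel g b)
  then show ?case by (cases g) (auto simp: tr_tr)
next
  case (rel u v)
  then show ?case by (rule ev_rels)
qed (auto simp: ev_append)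

theorem proposition5p1:
  fixes n c :: nat
  assumes "n \<ge> 3" and "c \<ge> 1"
  shows "\<forall>t \<in> {1..c}. \<forall>i \<in> {1..n-2}.
           \<not> uv_eq n c (rho i @ sig (i+1) t @ sig i t) (sig (i+1) t @ sig i t @ rho (i+1))
         \<and> \<not> uv_eq n c (rho (i+1) @ sig i t @ sig (i+1) t) (sig i t @ sig (i+1) t @ rho i)"
proof (intro ballI conjI notI)
  fix t i
  assume "uv_eq n c (rho i @ sig (i+1) t @ sig i t) (sig (i+1) t @ sig i t @ rho (i+1))"
  then have "ev (rho i @ sig (i+1) t @ sig i t) i = ev (sig (i+1) t @ sig i t @ rho (i+1)) i"
    by (simp add: ev_eq)
  then show False by (simp add: rho_def sig_def tr_def)
next
  fix t i
  assume "uv_eq n c (rho (i+1) @ sig i t @ sig (i+1) t) (sig i t @ sig (i+1) t @ rho i)"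
  then have "ev (rho (i+1) @ sig i t @ sig (i+1) t) i = ev (sig i t @ sig (i+1) t @ rho i) i"
    by (simp add: ev_eq)
  then show False by (simp add: rho_def sig_def tr_def)
qed

end
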